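(* Let $N\ge1$, $d\ge1$, $H\in(0,1)^N$ and let $v$ be an $(N,d)$-fractional Brownian sheet with Hurst parameter $H$. If $x^1,\dots,x^m\in(0,\infty)^N$ are distinct points, then the real random variables $v_1(x^1),\dots,v_1(x^m)$ are linearly independent.
   Context: An $(N,d)$-fractional Brownian sheet with Hurst parameter $H\in(0,1)^N$ is an $\mathbb{R}^d$-valued continuous centered Gaussian field $\{v(x),x\in\mathbb{R}^N_+\}$ with $\mathrm E(v_j(x)v_\ell(y))=\delta_{j,\ell}\prod_{i=1}^N\frac12(|x_i|^{2H_i}+|y_i|^{2H_i}-|x_i-y_i|^{2H_i})$; $v_1$ denotes its first component. *)

theory Defs
  imports "HOL-Probability.Probability"
begin

definition real_gaussian :: "'a measure \<Rightarrow> ('a \<Rightarrow> real) \<Rightarrow> bool" where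
  "real_gaussian M X \<longleftrightarrow> X \<in> borel_measurable M \<and>
     (\<exists>mu sigma. (sigma = 0 \<and> distr M borel X = return borel mu) \<or>
                 (sigma > 0 \<and> distributed M lborel X (normal_density mu sigma)))"

definition gaussian_family :: "'a measure \<Rightarrow> ('i \<Rightarrow> 'a \<Rightarrow> real) \<Rightarrow> 'i set \<Rightarrow> bool" where
  "gaussian_family M X I \<longleftrightarrow>
     (\<forall>J c. finite J \<and> J \<subseteq> I \<longrightarrow> real_gaussian M (\<lambda>\<omega>. \<Sum>i\<in>J. c i * X i \<omega>))"

definition nonneg_orthant :: "(real^'n) set" where
  "nonneg_orthant = {x. \<forall>i. 0 \<le> x $ i}"

definition fbs_cov :: "real^'n \<Rightarrow> real^'n \<Rightarrow> real^'n \<Rightarrow> real" where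
  "fbs_cov H x y = (\<Prod>i\<in>UNIV. (1/2) * (\<bar>x $ i\<bar> powr (2 * H $ i) + \<bar>y $ i\<bar> powr (2 * H $ i)
                                       - \<bar>x $ i - y $ i\<bar> powr (2 * H $ i)))"

text \<open>(N,d)-fractional Brownian sheet on the probability space M: v \<omega> x j is the j-th
  component (j < d, components indexed 0..d-1, so v_1 is component 0) at the point x.\<close>
definition frac_brownian_sheet ::
  "'a measure \<Rightarrow> nat \<Rightarrow> real^'n \<Rightarrow> ('a \<Rightarrow> real^'n \<Rightarrow> nat \<Rightarrow> real) \<Rightarrow> bool" where
  "frac_brownian_sheet M d H v \<longleftrightarrow>
     prob_space M \<and>
     gaussian_family M (\<lambda>(x, j) \<omega>. v \<omega> x j) (nonneg_orthant \<times> {..<d}) \<and>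
     (\<forall>\<omega>\<in>space M. \<forall>j<d. continuous_on nonneg_orthant (\<lambda>x. v \<omega> x j)) \<and>
     (\<forall>x\<in>nonneg_orthant. \<forall>j<d. (\<integral>\<omega>. v \<omega> x j \<partial>M) = 0) \<and>
     (\<forall>x\<in>nonneg_orthant. \<forall>y\<in>nonneg_orthant. \<forall>j<d. \<forall>l<d.
        (\<integral>\<omega>. v \<omega> x j * v \<omega> y l \<partial>M) = (if j = l then 1 else 0) * fbs_cov H x y)"

end

theory Submission
  imports Defs
begin

definition spd :: "('a \<Rightarrow> 'a \<Rightarrow> real) \<Rightarrow> 'a set \<Rightarrow> bool" where
  "spd k S \<longleftrightarrow> (\<forall>F c. finite F \<and> F \<subseteq> S \<longrightarrow>
      0 \<le> (\<Sum>x\<in>F. \<Sum>y\<in>F. c x * c y * k x y) \<and>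
      ((\<Sum>x\<in>F. \<Sum>y\<in>F. c x * c y * k x y) = 0 \<longrightarrow> (\<forall>x\<in>F. c x = 0)))"

lemma spdD:
  assumes "spd k S" "finite F" "F \<subseteq> S"
  shows "0 \<le> (\<Sum>x\<in>F. \<Sum>y\<in>F. c x * c y * k x y)"
    "(\<Sum>x\<in>F. \<Sum>y\<in>F. c x * c y * k x y) = 0 \<Longrightarrow> x \<in> F \<Longrightarrow> c x = 0"
  using assms unfolding spd_def by blast+

lemma spd_diag_pos:
  assumes "spd k S" "a \<in> S" shows "k a a > 0"
proof -
  have "0 \<le> (\<Sum>x\<in>{a}. \<Sum>y\<in>{a}. (\<lambda>_. 1::real) x * (\<lambda>_. 1) y * k x y)"
    by (rule spdD(1)[OF assms(1)]) (use assms in auto)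
  moreover have "k a a \<noteq> 0"
    using spdD(2)[OF assms(1), of "{a}" "\<lambda>_. 1" a] assms by auto
  ultimately show ?thesis by simp
qed

lemma t_e1:
  fixes k :: "'a \<Rightarrow> 'a \<Rightarrow> real" and c :: "'a \<Rightarrow> real"
  assumes sym: "\<And>x y. k x y = k y x" and a0: "a0 \<notin> F" and fin: "finite F"
    and \<sigma>_def: "\<sigma> = (\<Sum>x\<in>F. c x * k x a0)"
    and c'F: "\<And>x. x \<in> F \<Longrightarrow> c' x = c x"
  shows "(\<Sum>x\<in>insert a0 F. \<Sum>y\<in>insert a0 F. c' x * c' y * k x y)
     = c' a0 * c' a0 * k a0 a0 + 2 * c' a0 * \<sigma> + (\<Sum>x\<in>F. \<Sum>y\<in>F. c x * c y * k x y)"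
proof -
  have "(\<Sum>x\<in>insert a0 F. \<Sum>y\<in>insert a0 F. c' x * c' y * k x y)
    = (\<Sum>y\<in>insert a0 F. c' a0 * c' y * k a0 y) + (\<Sum>x\<in>F. \<Sum>y\<in>insert a0 F. c' x * c' y * k x y)"
    using fin a0 by (rule sum.insert)
  also have "(\<Sum>y\<in>insert a0 F. c' a0 * c' y * k a0 y) = c' a0 * c' a0 * k a0 a0 + (\<Sum>y\<in>F. c' a0 * c' y * k a0 y)"
    using fin a0 by (rule sum.insert)
  also have "(\<Sum>y\<in>F. c' a0 * c' y * k a0 y) = c' a0 * \<sigma>"
    unfolding \<sigma>_def sum_distrib_left
  proof (rule sum.cong)
    fix y assume "y \<in> F" then show "c' a0 * c' y * k a0 y = c' a0 * (c y * k y a0)"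
      using c'F[of y] sym[of a0 y] by simp
  qed simp
  also have "(\<Sum>x\<in>F. \<Sum>y\<in>insert a0 F. c' x * c' y * k x y)
     = (\<Sum>x\<in>F. c' a0 * (c x * k x a0) + (\<Sum>y\<in>F. c x * c y * k x y))"
  proof (rule sum.cong)
    fix x assume x: "x \<in> F"
    have "(\<Sum>y\<in>insert a0 F. c' x * c' y * k x y) = c' x * c' a0 * k x a0 + (\<Sum>y\<in>F. c' x * c' y * k x y)"
      using fin a0 by (rule sum.insert)
    also have "(\<Sum>y\<in>F. c' x * c' y * k x y) = (\<Sum>y\<in>F. c x * c y * k x y)"
      using c'F x by (intro sum.cong) auto
    finally show "(\<Sum>y\<in>insert a0 F. c' x * c' y * k x y) = c' a0 * (c x * k x a0) + (\<Sum>y\<in>F. c x * c y * k x y)"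
      using c'F[OF x] by (simp add: mult.commute mult.left_commute)
  qed simp
  also have "\<dots> = c' a0 * \<sigma> + (\<Sum>x\<in>F. \<Sum>y\<in>F. c x * c y * k x y)"
    unfolding \<sigma>_def sum.distrib sum_distrib_left by simp
  finally show ?thesis by linarith
qed

lemma t_e2: fixes k :: "'a \<Rightarrow> 'a \<Rightarrow> real" and c :: "'a \<Rightarrow> real"
  shows "(\<Sum>x\<in>F. \<Sum>y\<in>F. c x * c y * (k x y - k x a0 * k y a0 / k a0 a0))
     = (\<Sum>x\<in>F. \<Sum>y\<in>F. c x * c y * k x y) - (\<Sum>x\<in>F. c x * k x a0) * (\<Sum>x\<in>F. c x * k x a0) / k a0 a0"
proof -
  have "\<And>x y. c x * c y * (k x y - k x a0 * k y a0 / k a0 a0)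
      = c x * c y * k x y - (c x * k x a0) * (c y * k y a0) / k a0 a0"
    by (simp add: algebra_simps)
  then have "(\<Sum>x\<in>F. \<Sum>y\<in>F. c x * c y * (k x y - k x a0 * k y a0 / k a0 a0))
     = (\<Sum>x\<in>F. \<Sum>y\<in>F. c x * c y * k x y) - (\<Sum>x\<in>F. \<Sum>y\<in>F. (c x * k x a0) * (c y * k y a0) / k a0 a0)"
    by (simp add: sum_subtractf)
  also have "(\<Sum>x\<in>F. \<Sum>y\<in>F. (c x * k x a0) * (c y * k y a0) / k a0 a0) = (\<Sum>x\<in>F. c x * k x a0) * (\<Sum>x\<in>F. c x * k x a0) / k a0 a0"
    by (simp only: sum_divide_distrib sum_product)
  finally show ?thesis .
qed

lemma schur_identity:
  fixes k :: "'a \<Rightarrow> 'a \<Rightarrow> real" and c :: "'a \<Rightarrow> real"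
  assumes sym: "\<And>x y. k x y = k y x" and a0: "a0 \<notin> F" and fin: "finite F" and pos: "k a0 a0 > 0"
    and \<sigma>_def: "\<sigma> = (\<Sum>x\<in>F. c x * k x a0)"
    and c0: "c' a0 = - \<sigma> / k a0 a0" and c'F: "\<And>x. x \<in> F \<Longrightarrow> c' x = c x"
  shows "(\<Sum>x\<in>insert a0 F. \<Sum>y\<in>insert a0 F. c' x * c' y * k x y)
       = (\<Sum>x\<in>F. \<Sum>y\<in>F. c x * c y * (k x y - k x a0 * k y a0 / k a0 a0))"
proof -
  note e1 = t_e1[OF sym a0 fin \<sigma>_def c'F]
  have e2: "(\<Sum>x\<in>F. \<Sum>y\<in>F. c x * c y * (k x y - k x a0 * k y a0 / k a0 a0))
     = (\<Sum>x\<in>F. \<Sum>y\<in>F. c x * c y * k x y) - \<sigma> * \<sigma> / k a0 a0"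
    unfolding \<sigma>_def by (rule t_e2)
  have h: "c' a0 * k a0 a0 = - \<sigma>" using c0 pos by simp
  have "c' a0 * c' a0 * k a0 a0 + 2 * c' a0 * \<sigma> = c' a0 * \<sigma>"
    using h by (simp add: algebra_simps)
  also have "\<dots> = - (\<sigma> * \<sigma> / k a0 a0)" using c0 by simp
  finally have "c' a0 * c' a0 * k a0 a0 + 2 * c' a0 * \<sigma> = - (\<sigma> * \<sigma> / k a0 a0)" .
  then show ?thesis using e1 e2 by linarith
qed

lemma spd_features:
  assumes "spd k S" "finite P" "P \<subseteq> S" "\<And>x y. k x y = k y x"
  shows "\<exists>(n::nat) \<phi>. \<forall>a\<in>P. \<forall>b\<in>P. k a b = (\<Sum>r<n. \<phi> r a * \<phi> r b)"
  using assms(2,1,3,4)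
proof (induction P arbitrary: k S rule: finite_induct)
  case empty then show ?case by auto
next
  case (insert a0 F)
  have pos: "k a0 a0 > 0" using spd_diag_pos[OF insert(4)] insert(5) by simp
  define k' where "k' = (\<lambda>x y. k x y - k x a0 * k y a0 / k a0 a0)"
  have sym': "k' x y = k' y x" for x y unfolding k'_def using insert(6)[of x y] by (simp add: mult.commute)
  have "spd k' F"
    unfolding spd_def
  proof (intro allI impI)
    fix G c assume G: "finite G \<and> G \<subseteq> F"
    define \<sigma> where "\<sigma> = (\<Sum>x\<in>G. c x * k x a0)"
    define c' where "c' = c(a0 := - \<sigma> / k a0 a0)"
    have a0G: "a0 \<notin> G" using G insert(2) by auto
    have id: "(\<Sum>x\<in>insert a0 G. \<Sum>y\<in>insert a0 G. c' x * c' y * k x y)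
       = (\<Sum>x\<in>G. \<Sum>y\<in>G. c x * c y * k' x y)"
      unfolding k'_def
      by (rule schur_identity[OF insert(6) a0G _ pos \<sigma>_def]) (use G a0G in \<open>auto simp: c'_def\<close>)
    have sub: "insert a0 G \<subseteq> S" using G insert by auto
    show "0 \<le> (\<Sum>x\<in>G. \<Sum>y\<in>G. c x * c y * k' x y) \<and>
        ((\<Sum>x\<in>G. \<Sum>y\<in>G. c x * c y * k' x y) = 0 \<longrightarrow> (\<forall>x\<in>G. c x = 0))"
    proof (intro conjI impI ballI)
      show "0 \<le> (\<Sum>x\<in>G. \<Sum>y\<in>G. c x * c y * k' x y)"
        using spdD(1)[OF insert(4) _ sub, of c'] G id by simp
    next
      fix x assume "(\<Sum>x\<in>G. \<Sum>y\<in>G. c x * c y * k' x y) = 0" "x \<in> G"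
      then have "c' x = 0" using spdD(2)[OF insert(4) _ sub, of c'] G id by simp
      then show "c x = 0" using \<open>x \<in> G\<close> a0G unfolding c'_def by (cases "x = a0") auto
    qed
  qed
  then obtain n :: nat and \<phi> where \<phi>: "\<forall>a\<in>F. \<forall>b\<in>F. k' a b = (\<Sum>r<n. \<phi> r a * \<phi> r b)"
    using insert.IH[of k' F] sym' by blast
  define \<psi> where "\<psi> = (\<lambda>r a. if r < n then (if a = a0 then 0 else \<phi> r a) else k a a0 / sqrt (k a0 a0))"
  have "\<forall>a\<in>insert a0 F. \<forall>b\<in>insert a0 F. k a b = (\<Sum>r<Suc n. \<psi> r a * \<psi> r b)"
  proof (intro ballI)
    fix a b assume a: "a \<in> insert a0 F" and b: "b \<in> insert a0 F"
    have s: "(\<Sum>r<Suc n. \<psi> r a * \<psi> r b) = (\<Sum>r<n. \<psi> r a * \<psi> r b) + k a a0 * k b a0 / k a0 a0"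
    proof -
      have "\<psi> n a * \<psi> n b = k a a0 * k b a0 / (sqrt (k a0 a0) * sqrt (k a0 a0))"
        unfolding \<psi>_def by simp
      also have "sqrt (k a0 a0) * sqrt (k a0 a0) = k a0 a0" using pos by simp
      finally show ?thesis by (simp only: sum.lessThan_Suc)
    qed
    show "k a b = (\<Sum>r<Suc n. \<psi> r a * \<psi> r b)"
    proof (cases "a = a0 \<or> b = a0")
      case True
      then have "(\<Sum>r<n. \<psi> r a * \<psi> r b) = 0"
        by (intro sum.neutral ballI) (auto simp: \<psi>_def)
      moreover have "k a b = k a a0 * k b a0 / k a0 a0"
      proof (cases "a = a0")
        case True then show ?thesis using pos insert(6)[of a0 b] by simp
      next
        case False then have "b = a0" using \<open>a = a0 \<or> b = a0\<close> by simp
        then show ?thesis using pos by simp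
      qed
      ultimately show ?thesis unfolding s by simp
    next
      case False
      then have "a \<in> F" "b \<in> F" using a b by auto
      have "(\<Sum>r<n. \<psi> r a * \<psi> r b) = k' a b" using \<phi> \<open>a \<in> F\<close> \<open>b \<in> F\<close> False by (simp add: \<psi>_def)
      then show ?thesis unfolding s k'_def by simp
    qed
  qed
  then show ?case by blast
qed


lemma quad_pushforward:
  fixes d :: "'p \<Rightarrow> real" and k :: "'b \<Rightarrow> 'b \<Rightarrow> real"
  assumes fin: "finite F"
  shows "(\<Sum>p\<in>F. \<Sum>q\<in>F. d p * d q * k (h p) (h q))
       = (\<Sum>b\<in>h ` F. \<Sum>b'\<in>h ` F. (\<Sum>p\<in>{p\<in>F. h p = b}. d p) * (\<Sum>p\<in>{p\<in>F. h p = b'}. d p) * k b b')"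
proof -
  define e where "e b = (\<Sum>p\<in>{p\<in>F. h p = b}. d p)" for b
  have inner: "(\<Sum>q\<in>F. d q * k b (h q)) = (\<Sum>b'\<in>h ` F. e b' * k b b')" for b
  proof -
    have "(\<Sum>q\<in>F. d q * k b (h q)) = (\<Sum>b'\<in>h ` F. \<Sum>q\<in>{q\<in>F. h q = b'}. d q * k b (h q))"
      by (rule sum.image_gen[OF fin])
    also have "\<dots> = (\<Sum>b'\<in>h ` F. \<Sum>q\<in>{q\<in>F. h q = b'}. d q * k b b')"
      by (intro sum.cong refl) auto
    also have "\<dots> = (\<Sum>b'\<in>h ` F. e b' * k b b')"
      unfolding e_def by (simp add: sum_distrib_right)
    finally show ?thesis .
  qed
  have "(\<Sum>p\<in>F. \<Sum>q\<in>F. d p * d q * k (h p) (h q)) = (\<Sum>p\<in>F. d p * (\<Sum>q\<in>F. d q * k (h p) (h q)))"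
    by (simp add: sum_distrib_left mult.assoc)
  also have "\<dots> = (\<Sum>p\<in>F. d p * (\<Sum>b'\<in>h ` F. e b' * k (h p) b'))"
    using inner by simp
  also have "\<dots> = (\<Sum>b\<in>h ` F. \<Sum>p\<in>{p\<in>F. h p = b}. d p * (\<Sum>b'\<in>h ` F. e b' * k (h p) b'))"
    by (rule sum.image_gen[OF fin])
  also have "\<dots> = (\<Sum>b\<in>h ` F. \<Sum>p\<in>{p\<in>F. h p = b}. d p * (\<Sum>b'\<in>h ` F. e b' * k b b'))"
    by (intro sum.cong refl) auto
  also have "\<dots> = (\<Sum>b\<in>h ` F. e b * (\<Sum>b'\<in>h ` F. e b' * k b b'))"
    unfolding e_def by (simp add: sum_distrib_right)
  also have "\<dots> = (\<Sum>b\<in>h ` F. \<Sum>b'\<in>h ` F. e b * e b' * k b b')"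
    by (simp add: sum_distrib_left mult.assoc)
  finally show ?thesis unfolding e_def .
qed

lemma spd_pull:
  assumes "spd k S" "finite F" "h ` F \<subseteq> S"
  shows "0 \<le> (\<Sum>p\<in>F. \<Sum>q\<in>F. d p * d q * k (h p) (h q))"
    "(\<Sum>p\<in>F. \<Sum>q\<in>F. d p * d q * k (h p) (h q)) = 0 \<Longrightarrow> b \<in> h ` F \<Longrightarrow> (\<Sum>p\<in>{p\<in>F. h p = b}. d p) = 0"
  using spdD[OF assms(1) finite_imageI[OF assms(2)] assms(3), of "\<lambda>b. (\<Sum>p\<in>{p\<in>F. h p = b}. d p)"]
  unfolding quad_pushforward[OF assms(2), of d k h] by blast+

lemma spd_transport:
  assumes "spd K T" "inj_on h S" "h ` S \<subseteq> T" "\<And>x y. x \<in> S \<Longrightarrow> y \<in> S \<Longrightarrow> K' x y = K (h x) (h y)"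
  shows "spd K' S"
  unfolding spd_def
proof (intro allI impI conjI)
  fix F c assume F: "finite F \<and> F \<subseteq> S"
  have eq: "(\<Sum>x\<in>F. \<Sum>y\<in>F. c x * c y * K' x y) = (\<Sum>x\<in>F. \<Sum>y\<in>F. c x * c y * K (h x) (h y))"
    using F assms(4) by (intro sum.cong refl) (auto simp: subset_iff)
  have hF: "h ` F \<subseteq> T" using F assms(3) by auto
  show "0 \<le> (\<Sum>x\<in>F. \<Sum>y\<in>F. c x * c y * K' x y)"
    unfolding eq using spd_pull(1)[OF assms(1) _ hF] F by blast
  show "\<forall>x\<in>F. c x = 0" if "(\<Sum>x\<in>F. \<Sum>y\<in>F. c x * c y * K' x y) = 0"
  proof
    fix x assume x: "x \<in> F"
    have "{p \<in> F. h p = h x} = {x}" using x F assms(2) by (auto simp: inj_on_def subset_iff)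
    then show "c x = 0" using spd_pull(2)[OF assms(1) _ hF, of c "h x"] F that x unfolding eq by simp
  qed
qed

lemma feature_expand:
  fixes c :: "'p \<Rightarrow> real"
  shows "(\<Sum>p\<in>F. \<Sum>q\<in>F. c p * c q * ((\<Sum>r<n. \<phi> r p * \<phi> r q) * g p q))
       = (\<Sum>r<n. \<Sum>p\<in>F. \<Sum>q\<in>F. (c p * \<phi> r p) * (c q * \<phi> r q) * g p q)"
proof -
  have "(\<Sum>p\<in>F. \<Sum>q\<in>F. c p * c q * ((\<Sum>r<n. \<phi> r p * \<phi> r q) * g p q))
      = (\<Sum>p\<in>F. \<Sum>q\<in>F. \<Sum>r<n. (c p * \<phi> r p) * (c q * \<phi> r q) * g p q)"
    by (intro sum.cong refl) (simp add: sum_distrib_left sum_distrib_right mult_ac)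
  also have "\<dots> = (\<Sum>p\<in>F. \<Sum>r<n. \<Sum>q\<in>F. (c p * \<phi> r p) * (c q * \<phi> r q) * g p q)"
    by (intro sum.cong refl) (rule sum.swap)
  also have "\<dots> = (\<Sum>r<n. \<Sum>p\<in>F. \<Sum>q\<in>F. (c p * \<phi> r p) * (c q * \<phi> r q) * g p q)"
    by (rule sum.swap)
  finally show ?thesis .
qed

lemma spd_prod:
  assumes k1: "spd k1 S1" and k2: "spd k2 S2" and sym1: "\<And>x y. k1 x y = k1 y x"
  shows "spd (\<lambda>p q. k1 (fst p) (fst q) * k2 (snd p) (snd q)) (S1 \<times> S2)"
  unfolding spd_def
proof (intro allI impI conjI)
  fix F c assume F: "finite F \<and> F \<subseteq> S1 \<times> S2"
  have fin: "finite F" using F by blast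
  have P: "fst ` F \<subseteq> S1" "snd ` F \<subseteq> S2" using F by auto
  obtain n :: nat and \<phi> where \<phi>: "\<forall>a\<in>fst ` F. \<forall>b\<in>fst ` F. k1 a b = (\<Sum>r<n. \<phi> r a * \<phi> r b)"
    using spd_features[OF k1 finite_imageI[OF fin] P(1) sym1] by blast
  define Qr where "Qr r = (\<Sum>p\<in>F. \<Sum>q\<in>F. (c p * \<phi> r (fst p)) * (c q * \<phi> r (fst q)) * k2 (snd p) (snd q))" for r
  have eq: "(\<Sum>p\<in>F. \<Sum>q\<in>F. c p * c q * (k1 (fst p) (fst q) * k2 (snd p) (snd q))) = (\<Sum>r<n. Qr r)"
  proof -
    have "(\<Sum>p\<in>F. \<Sum>q\<in>F. c p * c q * (k1 (fst p) (fst q) * k2 (snd p) (snd q)))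
        = (\<Sum>p\<in>F. \<Sum>q\<in>F. c p * c q * ((\<Sum>r<n. \<phi> r (fst p) * \<phi> r (fst q)) * k2 (snd p) (snd q)))"
      using \<phi> by (intro sum.cong refl) auto
    also have "\<dots> = (\<Sum>r<n. Qr r)" unfolding Qr_def by (rule feature_expand)
    finally show ?thesis .
  qed
  have Qnn: "0 \<le> Qr r" for r unfolding Qr_def by (rule spd_pull(1)[OF k2 fin P(2)])
  show "0 \<le> (\<Sum>p\<in>F. \<Sum>q\<in>F. c p * c q * (k1 (fst p) (fst q) * k2 (snd p) (snd q)))"
    unfolding eq by (intro sum_nonneg) (use Qnn in auto)
  show "\<forall>x\<in>F. c x = 0" if z: "(\<Sum>p\<in>F. \<Sum>q\<in>F. c p * c q * (k1 (fst p) (fst q) * k2 (snd p) (snd q))) = 0"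
  proof
    fix x assume x: "x \<in> F"
    have Q0: "Qr r = 0" if "r < n" for r
      using z that Qnn unfolding eq by (subst (asm) sum_nonneg_eq_0_iff) auto
    define Fb where "Fb = {p\<in>F. snd p = snd x}"
    have finb: "finite Fb" using fin unfolding Fb_def by simp
    have e0: "(\<Sum>p\<in>Fb. c p * \<phi> r (fst p)) = 0" if "r < n" for r
      using spd_pull(2)[OF k2 fin P(2), of "\<lambda>p. c p * \<phi> r (fst p)" "snd x"] Q0[OF that] x
      unfolding Qr_def Fb_def by auto
    have "(\<Sum>p\<in>Fb. \<Sum>q\<in>Fb. c p * c q * k1 (fst p) (fst q)) = 0"
    proof -
      have "(\<Sum>p\<in>Fb. \<Sum>q\<in>Fb. c p * c q * k1 (fst p) (fst q))
          = (\<Sum>p\<in>Fb. \<Sum>q\<in>Fb. c p * c q * ((\<Sum>r<n. \<phi> r (fst p) * \<phi> r (fst q)) * 1))"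
        using \<phi> unfolding Fb_def by (intro sum.cong refl) auto
      also have "\<dots> = (\<Sum>r<n. \<Sum>p\<in>Fb. \<Sum>q\<in>Fb. (c p * \<phi> r (fst p)) * (c q * \<phi> r (fst q)) * 1)"
        by (rule feature_expand)
      also have "\<dots> = (\<Sum>r<n. (\<Sum>p\<in>Fb. c p * \<phi> r (fst p)) * (\<Sum>q\<in>Fb. c q * \<phi> r (fst q)))"
        by (simp add: sum_product)
      also have "\<dots> = 0" using e0 by simp
      finally show ?thesis .
    qed
    moreover have "fst ` Fb \<subseteq> S1" using P unfolding Fb_def by auto
    ultimately have "(\<Sum>p\<in>{p\<in>Fb. fst p = fst x}. c p) = 0"
      using spd_pull(2)[OF k1 finb, of fst c "fst x"] x unfolding Fb_def by auto
    moreover have "{p\<in>Fb. fst p = fst x} = {x}" using x unfolding Fb_def by (auto simp: prod_eq_iff)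
    ultimately show "c x = 0" by simp
  qed
qed

definition Kprod :: "('i \<Rightarrow> real \<Rightarrow> real \<Rightarrow> real) \<Rightarrow> 'i set \<Rightarrow> ('i \<Rightarrow> real) \<Rightarrow> ('i \<Rightarrow> real) \<Rightarrow> real" where
  "Kprod k I f g = (\<Prod>i\<in>I. k i (f i) (g i))"

definition Sorth :: "'i set \<Rightarrow> ('i \<Rightarrow> real) set" where
  "Sorth I = {f. (\<forall>i\<in>I. 0 < f i) \<and> (\<forall>i. i \<notin> I \<longrightarrow> f i = 0)}"

lemma spd_Kprod:
  fixes k :: "'i \<Rightarrow> real \<Rightarrow> real \<Rightarrow> real" and I :: "'i set"
  assumes "finite I" "\<And>i. spd (k i) {0<..}" "\<And>i s t. k i s t = k i t s"
  shows "spd (Kprod k I) (Sorth I)"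
  using assms(1)
proof (induction I rule: finite_induct)
  case empty
  have S: "Sorth {} = {\<lambda>_. 0}" unfolding Sorth_def by auto
  show ?case unfolding spd_def S Kprod_def
  proof (intro allI impI conjI)
    fix F :: "('i \<Rightarrow> real) set" and c :: "('i \<Rightarrow> real) \<Rightarrow> real" assume F: "finite F \<and> F \<subseteq> {\<lambda>_. 0}"
    then have "F = {} \<or> F = {\<lambda>_. 0}" by blast
    then show "0 \<le> (\<Sum>x\<in>F. \<Sum>y\<in>F. c x * c y * (\<Prod>i\<in>{}. k i (x i) (y i)))" by auto
    show "\<forall>x\<in>F. c x = 0" if "(\<Sum>x\<in>F. \<Sum>y\<in>F. c x * c y * (\<Prod>i\<in>{}. k i (x i) (y i))) = 0"
      using that \<open>F = {} \<or> F = {\<lambda>_. 0}\<close> by auto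
  qed
next
  case (insert j I)
  have symI: "Kprod k I f g = Kprod k I g f" for f g
    unfolding Kprod_def using assms(3) by (intro prod.cong refl) blast
  have P: "spd (\<lambda>p q. Kprod k I (fst p) (fst q) * k j (snd p) (snd q)) (Sorth I \<times> {0<..})"
    by (rule spd_prod[OF insert.IH assms(2) symI])
  define h where "h f = (f(j := 0), f j)" for f :: "'i \<Rightarrow> real"
  show ?case
  proof (rule spd_transport[OF P])
    show "inj_on h (Sorth (insert j I))"
      unfolding inj_on_def h_def
    proof (intro ballI impI)
      fix f g :: "'i \<Rightarrow> real" assume "(f(j := 0), f j) = (g(j := 0), g j)"
      then have "f(j := 0) = g(j := 0)" "f j = g j" by auto
      then show "f = g" by (metis fun_upd_triv fun_upd_upd)
    qed
    show "h ` Sorth (insert j I) \<subseteq> Sorth I \<times> {0<..}"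
      using insert(2) unfolding h_def Sorth_def by auto
    show "Kprod k (insert j I) f g = Kprod k I (fst (h f)) (fst (h g)) * k j (snd (h f)) (snd (h g))"
      if "f \<in> Sorth (insert j I)" "g \<in> Sorth (insert j I)" for f g
    proof -
      have "Kprod k I (f(j := 0)) (g(j := 0)) = Kprod k I f g"
        unfolding Kprod_def using insert(2) by (intro prod.cong refl) auto
      then show ?thesis unfolding h_def using insert(1,2) by (simp add: Kprod_def mult.commute)
    qed
  qed
qed

lemma vandermonde_aux:
  fixes d :: "real \<Rightarrow> real"
  assumes "finite G" "s0 \<notin> G" "\<forall>n. d s0 * s0 ^ n + (\<Sum>s\<in>G. d s * s ^ n) = 0"
  shows "d s0 = 0"
  using assms
proof (induction G arbitrary: d rule: finite_induct)
  case empty then show ?case using spec[OF empty(2), of 0] by simp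
next
  case (insert t G)
  have ts: "t \<noteq> s0" using insert(4) by auto
  define d' where "d' s = d s * (s - t)" for s
  have "\<forall>n. d' s0 * s0 ^ n + (\<Sum>s\<in>G. d' s * s ^ n) = 0"
  proof
    fix n
    have h1: "d s0 * s0 ^ Suc n + d t * t ^ Suc n + (\<Sum>s\<in>G. d s * s ^ Suc n) = 0"
      using spec[OF insert(5), of "Suc n"] insert(1,2) by (simp add: add.assoc)
    have h2: "d s0 * s0 ^ n + d t * t ^ n + (\<Sum>s\<in>G. d s * s ^ n) = 0"
      using spec[OF insert(5), of n] insert(1,2) by (simp add: add.assoc)
    have "d' s0 * s0 ^ n + (\<Sum>s\<in>G. d' s * s ^ n)
        = (d s0 * s0 ^ Suc n + (\<Sum>s\<in>G. d s * s ^ Suc n)) - t * (d s0 * s0 ^ n + (\<Sum>s\<in>G. d s * s ^ n))"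
      unfolding d'_def by (simp add: algebra_simps sum_distrib_left sum_subtractf)
    also have "\<dots> = (- (d t * t ^ Suc n)) - t * (- (d t * t ^ n))"
    proof -
      have e1: "d s0 * s0 ^ Suc n + (\<Sum>s\<in>G. d s * s ^ Suc n) = - (d t * t ^ Suc n)" using h1 by linarith
      have e2: "d s0 * s0 ^ n + (\<Sum>s\<in>G. d s * s ^ n) = - (d t * t ^ n)" using h2 by linarith
      show ?thesis by (simp only: e1 e2)
    qed
    also have "\<dots> = 0" by simp
    finally show "d' s0 * s0 ^ n + (\<Sum>s\<in>G. d' s * s ^ n) = 0" .
  qed
  then have "d' s0 = 0" using insert.IH[of d'] insert(4) by simp
  then show ?case using ts unfolding d'_def by simp
qed

lemma vandermonde_zero:
  fixes d :: "real \<Rightarrow> real"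
  assumes "finite F" "\<And>n. (\<Sum>s\<in>F. d s * s ^ n) = 0" "s0 \<in> F"
  shows "d s0 = 0"
proof (rule vandermonde_aux[of "F - {s0}" s0])
  show "\<forall>n. d s0 * s0 ^ n + (\<Sum>s\<in>F - {s0}. d s * s ^ n) = 0"
    using assms by (simp add: sum.remove)
qed (use assms in auto)

lemma exp_minus1_sums:
  fixes x :: real
  shows "(\<lambda>n. x ^ Suc n / fact (Suc n)) sums (exp x - 1)"
proof -
  have "(\<lambda>n. x ^ n / fact n) sums exp x" using exp_converges[of x] by (simp add: divide_inverse_commute scaleR_conv_of_real)
  then have "(\<lambda>n. x ^ Suc n / fact (Suc n)) sums (exp x - x ^ 0 / fact 0)"
    by (subst sums_Suc_iff) simp
  then show ?thesis by simp
qed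

lemma gauss_quad:
  fixes F :: "real set" and c :: "real \<Rightarrow> real" and u :: real
  assumes fin: "finite F" and pos: "F \<subseteq> {0<..}" and u: "u > 0"
  shows "0 \<le> (\<Sum>s\<in>F. \<Sum>t\<in>F. c s * c t * (1 - exp (-(u * s^2)) - exp (-(u * t^2)) + exp (-(u * (s - t)^2))))"
    and "(\<Sum>s\<in>F. \<Sum>t\<in>F. c s * c t * (1 - exp (-(u * s^2)) - exp (-(u * t^2)) + exp (-(u * (s - t)^2)))) = 0
         \<Longrightarrow> s0 \<in> F \<Longrightarrow> c s0 = 0"
proof -
  define E where "E s = exp (-(u * s^2))" for s
  define b where "b s = c s * E s" for s
  define A where "A = (\<Sum>s\<in>F. c s * (1 - E s))"
  define T where "T = (\<Sum>s\<in>F. \<Sum>t\<in>F. b s * b t * (exp (2 * u * s * t) - 1))"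
  define P where "P n = (\<Sum>s\<in>F. b s * s ^ Suc n)" for n
  define a where "a n = (2 * u) ^ Suc n / fact (Suc n)" for n :: nat
  have apos: "a n > 0" for n unfolding a_def using u by simp
  have X: "exp (-(u * (s - t)^2)) = E s * E t * exp (2 * u * s * t)" for s t
    unfolding E_def by (simp add: exp_add[symmetric] power2_eq_square algebra_simps)
  have g: "(\<Sum>s\<in>F. \<Sum>t\<in>F. c s * c t * (1 - exp (-(u * s^2)) - exp (-(u * t^2)) + exp (-(u * (s - t)^2))))
      = A * A + T"
  proof -
    have "(\<Sum>s\<in>F. \<Sum>t\<in>F. c s * c t * (1 - exp (-(u * s^2)) - exp (-(u * t^2)) + exp (-(u * (s - t)^2))))
        = (\<Sum>s\<in>F. \<Sum>t\<in>F. (c s * (1 - E s)) * (c t * (1 - E t)) + b s * b t * (exp (2 * u * s * t) - 1))"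
      unfolding X by (intro sum.cong refl) (simp add: b_def E_def algebra_simps)
    also have "\<dots> = A * A + T"
      unfolding A_def T_def by (simp add: sum.distrib sum_product)
    finally show ?thesis .
  qed
  have Tsums: "(\<lambda>n. a n * (P n)^2) sums T"
  proof -
    have "(\<lambda>n. \<Sum>s\<in>F. \<Sum>t\<in>F. b s * b t * ((2 * u * s * t) ^ Suc n / fact (Suc n))) sums T"
      unfolding T_def by (intro sums_sum sums_mult exp_minus1_sums)
    moreover have "(\<Sum>s\<in>F. \<Sum>t\<in>F. b s * b t * ((2 * u * s * t) ^ Suc n / fact (Suc n))) = a n * (P n)^2" for n
    proof -
      have "(\<Sum>s\<in>F. \<Sum>t\<in>F. b s * b t * ((2 * u * s * t) ^ Suc n / fact (Suc n)))
          = (\<Sum>s\<in>F. \<Sum>t\<in>F. a n * ((b s * s ^ Suc n) * (b t * t ^ Suc n)))"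
        unfolding a_def by (intro sum.cong refl) (simp add: power_mult_distrib)
      also have "\<dots> = a n * (P n)^2"
        unfolding P_def power2_eq_square sum_product by (simp only: sum_distrib_left)
      finally show ?thesis .
    qed
    ultimately show ?thesis by simp
  qed
  have Tnn: "0 \<le> T"
    using sums_le[of "\<lambda>_. 0" "\<lambda>n. a n * (P n)^2" 0 T] Tsums apos
    by (simp add: less_imp_le)
  show "0 \<le> (\<Sum>s\<in>F. \<Sum>t\<in>F. c s * c t * (1 - exp (-(u * s^2)) - exp (-(u * t^2)) + exp (-(u * (s - t)^2))))"
    unfolding g using Tnn by simp
  assume z: "(\<Sum>s\<in>F. \<Sum>t\<in>F. c s * c t * (1 - exp (-(u * s^2)) - exp (-(u * t^2)) + exp (-(u * (s - t)^2)))) = 0"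
    and s0: "s0 \<in> F"
  have "T = 0" using z Tnn mult_nonneg_nonneg[of A A] mult_nonpos_nonpos[of A A] unfolding g by linarith
  then have "suminf (\<lambda>n. a n * (P n)^2) = 0" using Tsums by (simp add: sums_iff)
  moreover have "summable (\<lambda>n. a n * (P n)^2)" using Tsums by (simp add: sums_iff)
  moreover have "\<And>n. 0 \<le> a n * (P n)^2" using apos by (simp add: less_imp_le)
  ultimately have "\<forall>n. a n * (P n)^2 = 0"
    using suminf_eq_zero_iff[of "\<lambda>n. a n * (P n)^2"] by blast
  then have P0: "P n = 0" for n using apos[of n] by (metis less_irrefl mult_eq_0_iff power_eq_0_iff)
  have "b s0 * s0 = 0"
    by (rule vandermonde_zero[OF fin _ s0, of "\<lambda>s. b s * s"])
       (use P0 in \<open>simp add: P_def mult.assoc\<close>)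
  moreover have "s0 > 0" using pos s0 by auto
  moreover have "E s0 > 0" unfolding E_def by simp
  ultimately show "c s0 = 0" unfolding b_def by simp
qed

lemma AE_lborel_pos_exists:
  assumes "AE u in lborel. P u"
  shows "\<exists>u>0. P (u::real)"
proof (rule ccontr)
  assume "\<not> (\<exists>u>0. P u)"
  then have "AE u in lborel. u \<notin> {0<..<1::real}" using assms by (auto elim!: AE_mp)
  then have "emeasure lborel {0<..<1::real} = 0"
    by (subst (asm) AE_iff_measurable[of "{0<..<1::real}"]) auto
  then show False by simp
qed

lemma integrable_lborel_from_HK:
  fixes f :: "real \<Rightarrow> real"
  assumes "f \<in> borel_measurable borel" "\<And>x. 0 \<le> f x" "f integrable_on UNIV"
  shows "integrable lborel f"
proof -
  obtain I where I: "(f has_integral I) UNIV" using assms(3) by (auto simp: integrable_on_def)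
  have "integral\<^sup>N lborel f = I" by (rule nn_integral_has_integral_lborel[OF assms(1,2) I])
  then show ?thesis
    by (intro integrableI_nonneg) (use assms in auto)
qed

definition hf :: "real \<Rightarrow> real \<Rightarrow> real \<Rightarrow> real" where
  "hf \<beta> l u = indicator {0<..} u * (1 - exp (-(l * u))) * u powr (-1 - \<beta>)"

lemma hf_measurable[measurable]: "hf \<beta> l \<in> borel_measurable borel"
  unfolding hf_def by measurable

lemma hf_nonneg: "l \<ge> 0 \<Longrightarrow> 0 \<le> hf \<beta> l u"
  unfolding hf_def by (auto simp: indicator_def intro!: mult_nonneg_nonneg)

lemma hf_pos: "l > 0 \<Longrightarrow> u > 0 \<Longrightarrow> 0 < hf \<beta> l u"
  unfolding hf_def by (auto simp: indicator_def intro!: mult_pos_pos)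

lemma hf1_integrable:
  assumes b: "0 < \<beta>" "\<beta> < 1"
  shows "integrable lborel (hf \<beta> 1)"
proof -
  define B1 where "B1 u = indicator {0<..1} u * u powr (-\<beta>)" for u :: real
  define B2 where "B2 u = indicator {1..} u * u powr (-1-\<beta>)" for u :: real
  have i1: "integrable lborel B1"
  proof (rule integrable_lborel_from_HK)
    show "B1 \<in> borel_measurable borel" unfolding B1_def by measurable
    show "0 \<le> B1 x" for x unfolding B1_def by (auto simp: indicator_def)
    have "(\<lambda>x. x powr (-\<beta>)) integrable_on {0<..1}"
      by (rule integrable_on_powr_from_0') (use b in auto)
    then have "(\<lambda>x. if x \<in> {0<..1} then x powr (-\<beta>) else 0) integrable_on UNIV"
      by (subst integrable_restrict_UNIV)
    moreover have "(\<lambda>x. if x \<in> {0<..1} then x powr (-\<beta>) else 0) = B1"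
      unfolding B1_def by (auto simp: indicator_def)
    ultimately show "B1 integrable_on UNIV" by simp
  qed
  have i2: "integrable lborel B2"
  proof (rule integrable_lborel_from_HK)
    show "B2 \<in> borel_measurable borel" unfolding B2_def by measurable
    show "0 \<le> B2 x" for x unfolding B2_def by (auto simp: indicator_def)
    have "(\<lambda>x. x powr (-1-\<beta>)) integrable_on {1..}"
      using has_integral_powr_to_inf[of "-1-\<beta>" 1] b by (auto simp: integrable_on_def)
    then have "(\<lambda>x. if x \<in> {1..} then x powr (-1-\<beta>) else 0) integrable_on UNIV"
      by (subst integrable_restrict_UNIV)
    moreover have "(\<lambda>x. if x \<in> {1..} then x powr (-1-\<beta>) else 0) = B2"
      unfolding B2_def by (auto simp: indicator_def)
    ultimately show "B2 integrable_on UNIV" by simp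
  qed
  show ?thesis
  proof (rule Bochner_Integration.integrable_bound[OF Bochner_Integration.integrable_add[OF i1 i2]])
    show "hf \<beta> 1 \<in> borel_measurable lborel" by simp
    show "AE x in lborel. norm (hf \<beta> 1 x) \<le> norm (B1 x + B2 x)"
    proof (rule AE_I2)
      fix u :: real
      show "norm (hf \<beta> 1 u) \<le> norm (B1 u + B2 u)"
      proof (cases "u \<le> 0")
        case True then show ?thesis by (simp add: hf_def B1_def B2_def)
      next
        case False
        then have u: "u > 0" by simp
        have e1: "1 - exp (-u) \<le> u" using exp_ge_add_one_self[of "-u"] by simp
        have e2: "1 - exp (-u) \<le> 1" by simp
        have e0: "0 \<le> 1 - exp (-u)" using u by simp
        have hfu: "hf \<beta> 1 u = (1 - exp (-u)) * u powr (-1-\<beta>)" using u by (simp add: hf_def)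
        have B1n: "0 \<le> B1 u" "0 \<le> B2 u" unfolding B1_def B2_def by (auto simp: indicator_def)
        show ?thesis
        proof (cases "u \<le> 1")
          case True
          have "(1 - exp (-u)) * u powr (-1-\<beta>) \<le> u * u powr (-1-\<beta>)"
            by (rule mult_right_mono[OF e1]) simp
          also have "u * u powr (-1-\<beta>) = u powr (-\<beta>)"
            using u by (simp add: powr_add[symmetric] powr_mult_base)
          also have "\<dots> = B1 u" using u True by (simp add: B1_def)
          finally show ?thesis using hfu e0 B1n u by (simp add: abs_of_nonneg)
        next
          case False
          have "(1 - exp (-u)) * u powr (-1-\<beta>) \<le> 1 * u powr (-1-\<beta>)"
            by (rule mult_right_mono[OF e2]) simp
          also have "\<dots> = B2 u" using u False by (simp add: B2_def)
          finally show ?thesis using hfu e0 B1n u by (simp add: abs_of_nonneg)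
        qed
      qed
    qed
  qed
qed

lemma hf_scale:
  assumes b: "0 < \<beta>" "\<beta> < 1" and l: "l \<ge> 0"
  shows "integrable lborel (hf \<beta> l)" "integral\<^sup>L lborel (hf \<beta> l) = l powr \<beta> * integral\<^sup>L lborel (hf \<beta> 1)"
proof -
  have "integrable lborel (hf \<beta> l) \<and> integral\<^sup>L lborel (hf \<beta> l) = l powr \<beta> * integral\<^sup>L lborel (hf \<beta> 1)"
  proof (cases "l = 0")
    case True
    then have "hf \<beta> l = (\<lambda>_. 0)" by (auto simp: hf_def)
    then show ?thesis using True by simp
  next
    case False
    then have lp: "l > 0" using l by simp
    have eq: "hf \<beta> l (0 + (1/l) * x) = l powr (1 + \<beta>) * hf \<beta> 1 x" for x
    proof (cases "x > 0")
      case True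
      have "(x / l) powr (-1-\<beta>) = x powr (-1-\<beta>) * l powr (1 + \<beta>)"
      proof -
        have a: "(x / l) powr (-1-\<beta>) = x powr (-1-\<beta>) / l powr (-1-\<beta>)" by (rule powr_divide)
        have "l powr (-1-\<beta>) = l powr (- (1+\<beta>))" by simp
        also have "\<dots> = inverse (l powr (1+\<beta>))" by (rule powr_minus)
        finally show ?thesis unfolding a by (simp add: divide_inverse)
      qed
      then show ?thesis using True lp by (simp add: hf_def)
    next
      case False
      then show ?thesis using lp by (simp add: hf_def indicator_def divide_pos_pos field_simps)
    qed
    have int1: "integrable lborel (hf \<beta> 1)" by (rule hf1_integrable[OF b])
    have "integrable lborel (\<lambda>x. hf \<beta> l (0 + (1/l) * x))"
      unfolding eq using int1 by simp
    then have il: "integrable lborel (hf \<beta> l)"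
      using lborel_integrable_real_affine_iff[of "1/l" "hf \<beta> l" 0] lp by simp
    have "integral\<^sup>L lborel (hf \<beta> l) = \<bar>1/l\<bar> *\<^sub>R (\<integral>x. hf \<beta> l (0 + (1/l) * x) \<partial>lborel)"
      by (rule lborel_integral_real_affine) (use lp in simp)
    also have "\<dots> = (1/l) * (l powr (1 + \<beta>) * integral\<^sup>L lborel (hf \<beta> 1))"
      unfolding eq using lp by simp
    also have "\<dots> = l powr \<beta> * integral\<^sup>L lborel (hf \<beta> 1)"
      using lp by (simp add: powr_add)
    finally show ?thesis using il by simp
  qed
  then show "integrable lborel (hf \<beta> l)" "integral\<^sup>L lborel (hf \<beta> l) = l powr \<beta> * integral\<^sup>L lborel (hf \<beta> 1)"
    by auto
qed

lemma hf1_pos: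
  assumes b: "0 < \<beta>" "\<beta> < 1"
  shows "integral\<^sup>L lborel (hf \<beta> 1) > 0"
proof -
  have i: "integrable lborel (hf \<beta> 1)" by (rule hf1_integrable[OF b])
  have nn: "0 \<le> integral\<^sup>L lborel (hf \<beta> 1)" by (rule Bochner_Integration.integral_nonneg) (simp add: hf_nonneg)
  have "integral\<^sup>L lborel (hf \<beta> 1) \<noteq> 0"
  proof
    assume "integral\<^sup>L lborel (hf \<beta> 1) = 0"
    then have "AE u in lborel. hf \<beta> 1 u = 0"
      using integral_nonneg_eq_0_iff_AE[OF i] by (simp add: hf_nonneg)
    then obtain u where "u > 0" "hf \<beta> 1 u = 0" using AE_lborel_pos_exists by blast
    then show False using hf_pos[of 1 u \<beta>] by simp
  qed
  then show ?thesis using nn by simp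
qed

lemma abs_powr_sq: "\<bar>s::real\<bar> powr \<alpha> = (s^2) powr (\<alpha>/2)"
proof (cases "s = 0")
  case True then show ?thesis by simp
next
  case False
  have "s^2 = \<bar>s\<bar> powr 2" using False by (simp add: powr_realpow)
  then have "(s^2) powr (\<alpha>/2) = (\<bar>s\<bar> powr 2) powr (\<alpha>/2)" by (simp only:)
  also have "\<dots> = \<bar>s\<bar> powr (2 * (\<alpha>/2))" by (rule powr_powr)
  finally show ?thesis by simp
qed

lemma spd_fbm1:
  assumes a: "0 < \<alpha>" "\<alpha> < 2"
  shows "spd (\<lambda>s t. 1/2 * (\<bar>s\<bar> powr \<alpha> + \<bar>t\<bar> powr \<alpha> - \<bar>s - t\<bar> powr \<alpha>)) {0<..}"
  unfolding spd_def
proof (intro allI impI conjI)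
  fix F :: "real set" and c :: "real \<Rightarrow> real"
  assume F: "finite F \<and> F \<subseteq> {0<..}"
  then have fin: "finite F" and pos: "F \<subseteq> {0<..}" by auto
  define \<beta> where "\<beta> = \<alpha> / 2"
  have b: "0 < \<beta>" "\<beta> < 1" using a unfolding \<beta>_def by auto
  define I where "I = integral\<^sup>L lborel (hf \<beta> 1)"
  have Ipos: "I > 0" unfolding I_def by (rule hf1_pos[OF b])
  define H where "H s t u = hf \<beta> (s^2) u + hf \<beta> (t^2) u - hf \<beta> ((s-t)^2) u" for s t u :: real
  define G where "G u = (\<Sum>s\<in>F. \<Sum>t\<in>F. c s * c t * H s t u)" for u
  have intH: "integrable lborel (H s t)" for s t
    unfolding H_def by (intro Bochner_Integration.integrable_add Bochner_Integration.integrable_diff hf_scale(1)[OF b]) auto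
  have intG: "integrable lborel G"
    unfolding G_def by (intro Bochner_Integration.integrable_sum Bochner_Integration.integrable_mult_right intH)
  have pw: "\<bar>s\<bar> powr \<alpha> = integral\<^sup>L lborel (hf \<beta> (s^2)) / I" for s
    using hf_scale(2)[OF b, of "s^2"] Ipos unfolding I_def abs_powr_sq \<beta>_def by simp
  have intHv: "integral\<^sup>L lborel (H s t) = I * (\<bar>s\<bar> powr \<alpha> + \<bar>t\<bar> powr \<alpha> - \<bar>s - t\<bar> powr \<alpha>)" for s t
  proof -
    have "integral\<^sup>L lborel (H s t) = integral\<^sup>L lborel (hf \<beta> (s^2)) + integral\<^sup>L lborel (hf \<beta> (t^2)) - integral\<^sup>L lborel (hf \<beta> ((s-t)^2))"
      unfolding H_def
      by (subst Bochner_Integration.integral_diff)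
         (auto intro!: Bochner_Integration.integrable_add hf_scale(1)[OF b]
               simp: Bochner_Integration.integral_add[OF hf_scale(1)[OF b] hf_scale(1)[OF b]])
    moreover have "I * (A/I + B/I - C/I) = A + B - C" for A B C using Ipos by (simp add: field_simps)
    ultimately show ?thesis unfolding pw by simp
  qed
  have Qeq: "(\<Sum>x\<in>F. \<Sum>y\<in>F. c x * c y * (1/2 * (\<bar>x\<bar> powr \<alpha> + \<bar>y\<bar> powr \<alpha> - \<bar>x - y\<bar> powr \<alpha>)))
      = integral\<^sup>L lborel G / (2 * I)"
  proof -
    have inner: "integral\<^sup>L lborel (\<lambda>u. \<Sum>t\<in>F. c s * c t * H s t u) = (\<Sum>t\<in>F. c s * c t * integral\<^sup>L lborel (H s t))" for s
      by (subst Bochner_Integration.integral_sum) (auto intro!: Bochner_Integration.integrable_mult_right intH)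
    have "integral\<^sup>L lborel G = (\<Sum>s\<in>F. integral\<^sup>L lborel (\<lambda>u. \<Sum>t\<in>F. c s * c t * H s t u))"
      unfolding G_def
      by (rule Bochner_Integration.integral_sum)
         (auto intro!: Bochner_Integration.integrable_sum Bochner_Integration.integrable_mult_right intH)
    also have "\<dots> = (\<Sum>s\<in>F. \<Sum>t\<in>F. c s * c t * integral\<^sup>L lborel (H s t))"
      unfolding inner ..
    also have "\<dots> = (2 * I) * (\<Sum>x\<in>F. \<Sum>y\<in>F. c x * c y * (1/2 * (\<bar>x\<bar> powr \<alpha> + \<bar>y\<bar> powr \<alpha> - \<bar>x - y\<bar> powr \<alpha>)))"
      unfolding intHv sum_distrib_left by (intro sum.cong refl) (simp add: algebra_simps)
    finally show ?thesis using Ipos by simp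
  qed
  have Gform: "G u = indicator {0<..} u * u powr (-1-\<beta>) *
      (\<Sum>s\<in>F. \<Sum>t\<in>F. c s * c t * (1 - exp (-(u * s^2)) - exp (-(u * t^2)) + exp (-(u * (s - t)^2))))" for u
    unfolding G_def H_def hf_def sum_distrib_left
    by (intro sum.cong refl) (simp add: algebra_simps)
  have Gnn: "0 \<le> G u" for u
  proof (cases "u > 0")
    case True
    then show ?thesis unfolding Gform using gauss_quad(1)[OF fin pos True, of c] by simp
  next
    case False then show ?thesis unfolding Gform by simp
  qed
  have intGnn: "0 \<le> integral\<^sup>L lborel G" by (rule Bochner_Integration.integral_nonneg) (simp add: Gnn)
  show "0 \<le> (\<Sum>x\<in>F. \<Sum>y\<in>F. c x * c y * (1/2 * (\<bar>x\<bar> powr \<alpha> + \<bar>y\<bar> powr \<alpha> - \<bar>x - y\<bar> powr \<alpha>)))"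
    unfolding Qeq using intGnn Ipos by simp
  show "\<forall>x\<in>F. c x = 0"
    if z: "(\<Sum>x\<in>F. \<Sum>y\<in>F. c x * c y * (1/2 * (\<bar>x\<bar> powr \<alpha> + \<bar>y\<bar> powr \<alpha> - \<bar>x - y\<bar> powr \<alpha>))) = 0"
  proof
    fix s0 assume s0: "s0 \<in> F"
    have "integral\<^sup>L lborel G = 0" using z Ipos unfolding Qeq by simp
    then have "AE u in lborel. G u = 0" using integral_nonneg_eq_0_iff_AE[OF intG] Gnn by simp
    then obtain u where u: "u > 0" "G u = 0" using AE_lborel_pos_exists by blast
    have "u powr (-1-\<beta>) > 0" using u by simp
    then have "(\<Sum>s\<in>F. \<Sum>t\<in>F. c s * c t * (1 - exp (-(u * s^2)) - exp (-(u * t^2)) + exp (-(u * (s - t)^2)))) = 0"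
      using u unfolding Gform by simp
    then show "c s0 = 0" by (rule gauss_quad(2)[OF fin pos u(1) _ s0])
  qed
qed

lemma abs_mult_le_sq: "\<bar>a * b\<bar> \<le> a * a + b * (b::real)"
proof -
  have h: "0 \<le> (\<bar>a\<bar> - \<bar>b\<bar>) * (\<bar>a\<bar> - \<bar>b\<bar>)" by simp
  have "(\<bar>a\<bar> - \<bar>b\<bar>) * (\<bar>a\<bar> - \<bar>b\<bar>) = \<bar>a\<bar> * \<bar>a\<bar> + \<bar>b\<bar> * \<bar>b\<bar> - 2 * (\<bar>a\<bar> * \<bar>b\<bar>)"
    by (simp add: algebra_simps)
  moreover have "\<bar>a\<bar> * \<bar>a\<bar> = a * a" "\<bar>b\<bar> * \<bar>b\<bar> = b * b" by (simp_all add: abs_mult_self_eq)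
  moreover have "\<bar>a * b\<bar> = \<bar>a\<bar> * \<bar>b\<bar>" "0 \<le> \<bar>a\<bar> * \<bar>b\<bar>" by (simp_all add: abs_mult)
  ultimately show ?thesis using h by linarith
qed

lemma spd_fbs_cov:
  fixes H :: "real^'n"
  assumes "\<forall>i. 0 < H $ i \<and> H $ i < 1"
  shows "spd (fbs_cov H) {p :: real^'n. \<forall>i. 0 < p $ i}"
proof -
  define k where "k i s t = 1/2 * (\<bar>s\<bar> powr (2 * H $ i) + \<bar>t\<bar> powr (2 * H $ i) - \<bar>s - t\<bar> powr (2 * H $ i))" for i s t
  have sk: "spd (k i) {0<..}" for i
    unfolding k_def by (rule spd_fbm1) (use assms in auto)
  have symk: "k i s t = k i t s" for i s t
    unfolding k_def by (simp add: abs_minus_commute)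
  have P: "spd (Kprod k UNIV) (Sorth UNIV)"
    by (rule spd_Kprod[OF _ sk symk]) simp
  show ?thesis
  proof (rule spd_transport[OF P])
    show "inj_on (\<lambda>p :: real^'n. \<lambda>i. p $ i) {p. \<forall>i. 0 < p $ i}"
      by (auto simp: inj_on_def vec_eq_iff fun_eq_iff)
    show "(\<lambda>p :: real^'n. \<lambda>i. p $ i) ` {p. \<forall>i. 0 < p $ i} \<subseteq> Sorth UNIV"
      by (auto simp: Sorth_def)
    show "fbs_cov H p q = Kprod k UNIV (\<lambda>i. p $ i) (\<lambda>i. q $ i)" for p q
      unfolding fbs_cov_def Kprod_def k_def by simp
  qed
qed

theorem lemma5p3:
  fixes M :: "'a measure" and d :: nat and H :: "real^'n"
    and v :: "'a \<Rightarrow> real^'n \<Rightarrow> nat \<Rightarrow> real"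
    and m :: nat and x :: "nat \<Rightarrow> real^'n"
  assumes "d \<ge> 1"
    and "\<forall>i. 0 < H $ i \<and> H $ i < 1"
    and "frac_brownian_sheet M d H v"
    and "inj_on x {..<m}"
    and "\<forall>k<m. \<forall>i. 0 < x k $ i"
  shows "\<forall>c :: nat \<Rightarrow> real. (AE \<omega> in M. (\<Sum>k<m. c k * v \<omega> (x k) 0) = 0)
           \<longrightarrow> (\<forall>k<m. c k = 0)"
proof (rule allI, rule impI)
  fix c :: "nat \<Rightarrow> real"
  assume AE0: "AE \<omega> in M. (\<Sum>k<m. c k * v \<omega> (x k) 0) = 0"
  have gf: "gaussian_family M (\<lambda>(x, j) \<omega>. v \<omega> x j) (nonneg_orthant \<times> {..<d})"
    and cov: "\<forall>x\<in>nonneg_orthant. \<forall>y\<in>nonneg_orthant. \<forall>j<d. \<forall>l<d.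
        (\<integral>\<omega>. v \<omega> x j * v \<omega> y l \<partial>M) = (if j = l then 1 else 0) * fbs_cov H x y"
    using assms(3) unfolding frac_brownian_sheet_def by blast+
  define V where "V k \<omega> = v \<omega> (x k) 0" for k \<omega>
  have d0: "0 < d" using assms(1) by simp
  have orth: "x k \<in> nonneg_orthant" if "k < m" for k
  proof -
    have "\<forall>i. 0 < x k $ i" using assms(5) that by blast
    then have "\<forall>i. 0 \<le> x k $ i" by (meson less_imp_le)
    then show ?thesis by (simp add: nonneg_orthant_def)
  qed
  have meas: "V k \<in> borel_measurable M" if "k < m" for k
  proof -
    have gf': "real_gaussian M (\<lambda>\<omega>. \<Sum>i\<in>J. cc i * (\<lambda>(x, j) \<omega>. v \<omega> x j) i \<omega>)"
      if "finite J" "J \<subseteq> nonneg_orthant \<times> {..<d}" for J and cc :: "(real^'n) \<times> nat \<Rightarrow> real"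
      using gf that unfolding gaussian_family_def by blast
    have sub: "{(x k, 0::nat)} \<subseteq> nonneg_orthant \<times> {..<d}" using orth[OF that] d0 by simp
    have "real_gaussian M (\<lambda>\<omega>. \<Sum>i\<in>{(x k, 0::nat)}. (\<lambda>_. 1::real) i * (\<lambda>(x, j) \<omega>. v \<omega> x j) i \<omega>)"
      by (rule gf'[OF _ sub]) simp
    then show ?thesis unfolding real_gaussian_def V_def by simp
  qed
  have cov0: "(\<integral>\<omega>. V k \<omega> * V l \<omega> \<partial>M) = fbs_cov H (x k) (x l)" if "k < m" "l < m" for k l
    using cov orth[OF that(1)] orth[OF that(2)] d0 unfolding V_def by simp
  have diag: "fbs_cov H (x k) (x k) \<noteq> 0" if "k < m" for k
  proof -
    have "fbs_cov H (x k) (x k) = (\<Prod>i\<in>UNIV. \<bar>x k $ i\<bar> powr (2 * H $ i))"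
      unfolding fbs_cov_def by simp
    also have "\<dots> > 0"
    proof (intro prod_pos ballI)
      fix i
      have "0 < x k $ i" using assms(5) that by blast
      then show "0 < \<bar>x k $ i\<bar> powr (2 * H $ i)" by simp
    qed
    finally show ?thesis by simp
  qed
  have sqint: "integrable M (\<lambda>\<omega>. V k \<omega> * V k \<omega>)" if "k < m" for k
  proof (rule ccontr)
    assume "\<not> integrable M (\<lambda>\<omega>. V k \<omega> * V k \<omega>)"
    then have "(\<integral>\<omega>. V k \<omega> * V k \<omega> \<partial>M) = 0" by (rule not_integrable_integral_eq)
    then show False using cov0[OF that that] diag[OF that] by simp
  qed
  have prodint: "integrable M (\<lambda>\<omega>. V k \<omega> * V l \<omega>)" if "k < m" "l < m" for k l
  proof (rule Bochner_Integration.integrable_bound[OF Bochner_Integration.integrable_add[OF sqint[OF that(1)] sqint[OF that(2)]]])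
    show "(\<lambda>\<omega>. V k \<omega> * V l \<omega>) \<in> borel_measurable M"
      by (intro borel_measurable_times meas that)
    show "AE \<omega> in M. norm (V k \<omega> * V l \<omega>) \<le> norm (V k \<omega> * V k \<omega> + V l \<omega> * V l \<omega>)"
    proof (rule AE_I2)
      fix \<omega>
      have "\<bar>V k \<omega> * V l \<omega>\<bar> \<le> V k \<omega> * V k \<omega> + V l \<omega> * V l \<omega>"
        by (rule abs_mult_le_sq)
      then show "norm (V k \<omega> * V l \<omega>) \<le> norm (V k \<omega> * V k \<omega> + V l \<omega> * V l \<omega>)" by simp
    qed
  qed
  have row: "(\<Sum>k<m. c k * fbs_cov H (x k) (x l)) = 0" if l: "l < m" for l
  proof -
    have "(\<integral>\<omega>. (\<Sum>k<m. c k * V k \<omega>) * V l \<omega> \<partial>M) = 0"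
      by (rule integral_eq_zero_AE) (use AE0 in \<open>auto simp: V_def elim!: AE_mp\<close>)
    moreover have "(\<integral>\<omega>. (\<Sum>k<m. c k * V k \<omega>) * V l \<omega> \<partial>M) = (\<Sum>k<m. c k * (\<integral>\<omega>. V k \<omega> * V l \<omega> \<partial>M))"
    proof -
      have "(\<integral>\<omega>. (\<Sum>k<m. c k * V k \<omega>) * V l \<omega> \<partial>M) = (\<integral>\<omega>. (\<Sum>k<m. c k * (V k \<omega> * V l \<omega>)) \<partial>M)"
        by (simp add: sum_distrib_right mult.assoc)
      also have "\<dots> = (\<Sum>k<m. (\<integral>\<omega>. c k * (V k \<omega> * V l \<omega>) \<partial>M))"
        by (rule Bochner_Integration.integral_sum)
           (use prodint l in \<open>auto intro!: Bochner_Integration.integrable_mult_right\<close>)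
      also have "\<dots> = (\<Sum>k<m. c k * (\<integral>\<omega>. V k \<omega> * V l \<omega> \<partial>M))" by simp
      finally show ?thesis .
    qed
    ultimately show ?thesis using cov0 l by simp
  qed
  have Q0: "(\<Sum>k<m. \<Sum>l<m. c k * c l * fbs_cov H (x k) (x l)) = 0"
  proof -
    have "(\<Sum>k<m. \<Sum>l<m. c k * c l * fbs_cov H (x k) (x l)) = (\<Sum>l<m. \<Sum>k<m. c k * c l * fbs_cov H (x k) (x l))"
      by (rule sum.swap)
    also have "\<dots> = (\<Sum>l<m. c l * (\<Sum>k<m. c k * fbs_cov H (x k) (x l)))"
      by (simp add: sum_distrib_left mult_ac)
    also have "\<dots> = 0" using row by simp
    finally show ?thesis .
  qed
  define F where "F = x ` {..<m}"
  define c' where "c' p = c (the_inv_into {..<m} x p)" for p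
  have c'x: "c' (x k) = c k" if "k < m" for k
    unfolding c'_def using the_inv_into_f_f[OF assms(4)] that by simp
  have "(\<Sum>p\<in>F. \<Sum>q\<in>F. c' p * c' q * fbs_cov H p q) = (\<Sum>k<m. \<Sum>l<m. c k * c l * fbs_cov H (x k) (x l))"
    unfolding F_def sum.reindex[OF assms(4)] by (simp add: c'x)
  then have QF: "(\<Sum>p\<in>F. \<Sum>q\<in>F. c' p * c' q * fbs_cov H p q) = 0" using Q0 by simp
  have FP: "F \<subseteq> {p. \<forall>i. 0 < p $ i}" using assms(5) unfolding F_def by auto
  show "\<forall>k<m. c k = 0"
  proof (intro allI impI)
    fix k assume k: "k < m"
    have "c' (x k) = 0"
      by (rule spdD(2)[OF spd_fbs_cov[OF assms(2)] _ FP QF]) (use k in \<open>auto simp: F_def\<close>)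
    then show "c k = 0" using c'x[OF k] by simp
  qed
qed

end
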